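(* Let $p,q\in(0,1)$. The following are equivalent: (a) $\mathbb{P}^{(1,1)}_{p,q}(\tau=+\infty)>0$; (b) there exist integers $N\ge1$ and $T\ge1$ such that $\mathbb{E}^{(N,N)}_{p,q}\big[\lfloor Z_T/N\rfloor\big]>1$.
   Context: Cooperative model: for $p,q\in(0,1)$, a Markov chain $(X_n,Y_n)_{n\ge0}$ on $\mathbb{N}^2$ whose transition law from state $(x,y)$ is $\mu_{(x,y)}=\mathrm{Bin}(2,q)^{*(x+y)}\otimes\mathrm{Bin}(2,p)^{*\min(x,y)}$, i.e. given the past, $X_{n+1}\sim\mathrm{Bin}(2(X_n+Y_n),q)$ and $Y_{n+1}\sim\mathrm{Bin}(2\min(X_n,Y_n),p)$ are independent. $\mathbb{P}^{(x,y)}_{p,q}$ (with expectation $\mathbb{E}^{(x,y)}_{p,q}$) denotes the law of this process started from $(x,y)$. $Z_n=\min(X_n,Y_n)$ and $\tau=\inf\{n\ge0: Z_n=0\}$. *)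

theory Defs
  imports "HOL-Probability.Probability"
begin

text \<open>One-step transition law of the cooperative model from state (x,y):
  X' ~ Bin(2(x+y), q) and Y' ~ Bin(2 min(x,y), p), independent.
  Note Bin(2,q)^{*(x+y)} = Bin(2(x+y),q).\<close>
definition coop_step :: "real \<Rightarrow> real \<Rightarrow> nat \<times> nat \<Rightarrow> (nat \<times> nat) pmf" where
  "coop_step p q s = (case s of (x, y) \<Rightarrow>
      pair_pmf (binomial_pmf (2 * (x + y)) q) (binomial_pmf (2 * min x y) p))"

primrec coop_path :: "real \<Rightarrow> real \<Rightarrow> nat \<Rightarrow> nat \<times> nat \<Rightarrow> (nat \<times> nat) list pmf" where
  "coop_path p q 0 s = return_pmf [s]"
| "coop_path p q (Suc n) s =
     bind_pmf (coop_step p q s) (\<lambda>t. map_pmf (Cons s) (coop_path p q n t))"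

definition coop_state :: "real \<Rightarrow> real \<Rightarrow> nat \<Rightarrow> nat \<times> nat \<Rightarrow> (nat \<times> nat) pmf" where
  "coop_state p q n s = map_pmf last (coop_path p q n s)"

definition Zval :: "nat \<times> nat \<Rightarrow> nat" where
  "Zval s = min (fst s) (snd s)"

text \<open>P^s(tau > n) = P^s(Z_0 > 0, ..., Z_n > 0).\<close>
definition coop_surv :: "real \<Rightarrow> real \<Rightarrow> nat \<Rightarrow> nat \<times> nat \<Rightarrow> real" where
  "coop_surv p q n s = measure_pmf.prob (coop_path p q n s) {xs. \<forall>z\<in>set xs. 0 < Zval z}"

text \<open>P^s(tau = +infinity) = lim_n P^s(tau > n) = inf_n P^s(tau > n)
  (continuity from above of the path measure; the events are decreasing).\<close>
definition coop_surv_inf :: "real \<Rightarrow> real \<Rightarrow> nat \<times> nat \<Rightarrow> real" where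
  "coop_surv_inf p q s = (INF n. coop_surv p q n s)"

end

theory Submission
  imports Defs
begin

lemma E_fin_bind:
  fixes h :: "'b \<Rightarrow> real"
  assumes "finite (set_pmf M)" "\<And>x. x \<in> set_pmf M \<Longrightarrow> finite (set_pmf (N x))"
  shows "measure_pmf.expectation (M \<bind> N) h = measure_pmf.expectation M (\<lambda>x. measure_pmf.expectation (N x) h)"
proof -
  have "measure_pmf.expectation (M \<bind> N) h = (\<Sum>a\<in>set_pmf M. pmf M a *\<^sub>R measure_pmf.expectation (N a) h)"
    using assms by (intro pmf_expectation_bind) auto
  also have "\<dots> = measure_pmf.expectation M (\<lambda>x. measure_pmf.expectation (N x) h)"
    using assms by (subst integral_measure_pmf[of "set_pmf M"]) auto
  finally show ?thesis .
qed

lemma prob_as_E: "measure_pmf.prob M A = measure_pmf.expectation M (indicator A)"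
  by simp

locale coop =
  fixes p q :: real
  assumes p: "0 < p" "p < 1" and q: "0 < q" "q < 1"
begin

lemma fin_step: "finite (set_pmf (coop_step p q s))"
  using p q by (auto simp: coop_step_def split: prod.splits)

lemma path_nonempty: "xs \<in> set_pmf (coop_path p q n s) \<Longrightarrow> xs \<noteq> []"
  by (induction n arbitrary: s xs) auto

lemma state_0: "coop_state p q 0 s = return_pmf s"
  by (simp add: coop_state_def)

lemma state_Suc: "coop_state p q (Suc n) s = coop_step p q s \<bind> (\<lambda>t. coop_state p q n t)"
  unfolding coop_state_def
  by (auto simp: map_bind_pmf map_pmf_comp intro!: bind_pmf_cong map_pmf_cong dest: path_nonempty)

lemma fin_state: "finite (set_pmf (coop_state p q n s))"
  by (induction n arbitrary: s) (auto simp: state_0 state_Suc fin_step)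

lemma state_add: "coop_state p q (m + n) s = coop_state p q m s \<bind> (\<lambda>t. coop_state p q n t)"
  by (induction m arbitrary: s) (auto simp: state_0 state_Suc bind_return_pmf bind_assoc_pmf)

lemma state_1: "coop_state p q (Suc 0) s = coop_step p q s"
  by (simp add: state_Suc state_0 bind_return_pmf')

lemma state_Suc': "coop_state p q (Suc n) s = coop_state p q n s \<bind> coop_step p q"
  using state_add[of n "Suc 0" s] by (simp add: state_1)

lemma step_zero: "Zval s = 0 \<Longrightarrow> t \<in> set_pmf (coop_step p q s) \<Longrightarrow> Zval t = 0"
  using p q by (auto simp: coop_step_def Zval_def split: prod.splits)

lemma state_zero: "Zval s = 0 \<Longrightarrow> t \<in> set_pmf (coop_state p q n s) \<Longrightarrow> Zval t = 0"
  by (induction n arbitrary: s) (auto simp: state_0 state_Suc dest: step_zero)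

lemma fin_path: "finite (set_pmf (coop_path p q n s))"
  by (induction n arbitrary: s) (auto simp: fin_step)

lemma surv_eq: "coop_surv p q n s = measure_pmf.prob (coop_state p q n s) {t. 0 < Zval t}"
proof (induction n arbitrary: s)
  case 0
  then show ?case by (simp add: coop_surv_def state_0 indicator_def)
next
  case (Suc n)
  define Ev where "Ev = {xs. \<forall>z\<in>set xs. 0 < Zval (z::nat\<times>nat)}"
  have "coop_surv p q (Suc n) s = measure_pmf.expectation (coop_step p q s)
           (\<lambda>t. measure_pmf.prob (coop_path p q n t) (Cons s -` Ev))"
    unfolding coop_surv_def coop_path.simps Ev_def[symmetric]
    by (subst prob_as_E, subst E_fin_bind) (auto simp: fin_step fin_path)
  show ?case
  proof (cases "0 < Zval s")
    case True
    then have "Cons s -` Ev = Ev" by (auto simp: Ev_def)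
    then have "coop_surv p q (Suc n) s = measure_pmf.expectation (coop_step p q s)
           (\<lambda>t. measure_pmf.prob (coop_state p q n t) {t. 0 < Zval t})"
      using \<open>coop_surv p q (Suc n) s = _\<close> Suc.IH by (simp add: coop_surv_def Ev_def)
    also have "\<dots> = measure_pmf.prob (coop_state p q (Suc n) s) {t. 0 < Zval t}"
      unfolding state_Suc
      by (subst (2) prob_as_E, subst E_fin_bind) (auto simp: fin_step fin_state)
    finally show ?thesis .
  next
    case False
    then have "Cons s -` Ev = {}" by (auto simp: Ev_def)
    then have "coop_surv p q (Suc n) s = 0"
      using \<open>coop_surv p q (Suc n) s = _\<close> by simp
    moreover have "measure_pmf.prob (coop_state p q (Suc n) s) {t. 0 < Zval t} = 0"
      unfolding measure_pmf_zero_iff using False state_zero[of s _ "Suc n"] by auto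
    ultimately show ?thesis by simp
  qed
qed

lemma step_death:
  assumes "0 < Zval t" "Zval t \<le> M"
  shows "measure_pmf.prob (coop_step p q t) {u. 0 < Zval u} \<le> 1 - (1-p)^(2*M)"
proof -
  obtain x y where t: "t = (x,y)" by (cases t)
  let ?S = "coop_step p q t"
  have "measure_pmf.prob ?S {u. 0 < Zval u} \<le> measure_pmf.prob ?S (- {u. snd u = 0})"
    by (intro measure_pmf.finite_measure_mono) (auto simp: Zval_def)
  also have "\<dots> = 1 - measure_pmf.prob ?S {u. snd u = 0}"
    using measure_pmf.prob_compl[of "{u. snd u = 0}" ?S] by (simp add: Compl_eq_Diff_UNIV)
  also have "measure_pmf.prob ?S {u. snd u = 0} = measure_pmf.prob (map_pmf snd ?S) {0}"
    by (simp add: vimage_def)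
  also have "map_pmf snd ?S = binomial_pmf (2 * min x y) p"
    by (simp add: coop_step_def t map_snd_pair_pmf)
  also have "measure_pmf.prob (binomial_pmf (2 * min x y) p) {0} = (1-p)^(2 * min x y)"
    using p by (simp add: measure_pmf_single)
  finally have A: "measure_pmf.prob ?S {u. 0 < Zval u} \<le> 1 - (1-p)^(2 * min x y)" .
  have "(1-p)^(2 * min x y) \<ge> (1-p)^(2*M)"
    using p assms by (intro power_decreasing) (auto simp: t Zval_def)
  with A show ?thesis by simp
qed

lemma step_ineq:
  fixes M :: nat
  shows "measure_pmf.prob (coop_step p q t) {u. 0 < Zval u} \<le>
     indicator {u. 0 < Zval u} t - (1-p)^(2*M) * indicator {u. 0 < Zval u \<and> Zval u \<le> M} t"
proof (cases "Zval t = 0")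
  case True
  then have "measure_pmf.prob (coop_step p q t) {u. 0 < Zval u} = 0"
    unfolding measure_pmf_zero_iff using step_zero[of t] by auto
  with True show ?thesis by simp
next
  case False
  show ?thesis
  proof (cases "Zval t \<le> M")
    case True
    with False step_death[of t M] show ?thesis by simp
  next
    case False2: False
    with False show ?thesis by (simp add: measure_pmf.prob_le_1)
  qed
qed

lemma integ[simp]: "integrable (measure_pmf (coop_state p q n s)) (f :: _ \<Rightarrow> real)"
  by (rule integrable_measure_pmf_finite[OF fin_state])

lemma surv_imp:
  assumes E: "\<And>T. T \<ge> 1 \<Longrightarrow> measure_pmf.expectation (coop_state p q T (1,1)) (\<lambda>s. real (Zval s)) \<le> 1"
  shows "\<not> coop_surv_inf p q (1,1) > 0"
proof
  assume c: "coop_surv_inf p q (1,1) > 0"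
  define c where "c = coop_surv_inf p q (1,1)"
  define u where "u n = measure_pmf.prob (coop_state p q n (1,1)) {t. 0 < Zval t}" for n
  have uc: "u n \<ge> c" for n
  proof -
    have "bdd_below (range (\<lambda>n. coop_surv p q n (1,1)))"
      by (intro bdd_belowI[of _ 0]) (auto simp: coop_surv_def)
    then show ?thesis unfolding c_def coop_surv_inf_def u_def surv_eq[symmetric]
      by (rule cINF_lower) auto
  qed
  have cpos: "c > 0" using c by (simp add: c_def)
  obtain M :: nat where M: "real M \<ge> 2 / c" "M \<ge> 1"
    using real_arch_simple[of "2/c"] by (metis le_cases nat_le_real_less not_less of_nat_1 order.trans real_of_nat_ge_one_iff)
  define \<delta> where "\<delta> = (1-p)^(2*M)"
  have \<delta>: "\<delta> > 0" using p by (simp add: \<delta>_def)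
  have EZ: "measure_pmf.expectation (coop_state p q n (1,1)) (\<lambda>s. real (Zval s)) \<le> 1" for n
    using E[of n] by (cases n) (auto simp: state_0 Zval_def)
  have big: "measure_pmf.prob (coop_state p q n (1,1)) {t. M < Zval t} \<le> c / 2" for n
  proof -
    let ?S = "coop_state p q n (1,1)"
    have "measure_pmf.prob ?S {t. M < Zval t} = measure_pmf.expectation ?S (indicator {t. M < Zval t})"
      by simp
    also have "\<dots> \<le> measure_pmf.expectation ?S (\<lambda>s. real (Zval s) / M)"
      using M cpos by (intro integral_mono) (auto simp: indicator_def field_simps)
    also have "\<dots> = measure_pmf.expectation ?S (\<lambda>s. real (Zval s)) / M" by simp
    also have "\<dots> \<le> 1 / M" using EZ[of n] M by (intro divide_right_mono) auto
    also have "\<dots> \<le> c / 2" using M cpos by (simp add: field_simps)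
    finally show ?thesis .
  qed
  have dec: "u (Suc n) \<le> u n - \<delta> * c / 2" for n
  proof -
    let ?S = "coop_state p q n (1,1)"
    have "u (Suc n) = measure_pmf.expectation ?S (\<lambda>t. measure_pmf.prob (coop_step p q t) {u. 0 < Zval u})"
      unfolding u_def state_Suc' by (subst prob_as_E, subst E_fin_bind) (auto simp: fin_state fin_step)
    also have "\<dots> \<le> measure_pmf.expectation ?S (\<lambda>t. indicator {u. 0 < Zval u} t
        - \<delta> * indicator {u. 0 < Zval u \<and> Zval u \<le> M} t)"
      unfolding \<delta>_def by (intro integral_mono step_ineq) auto
    also have "\<dots> = u n - \<delta> * measure_pmf.prob ?S {u. 0 < Zval u \<and> Zval u \<le> M}"
      by (simp add: u_def)
    also have "measure_pmf.prob ?S {u. 0 < Zval u \<and> Zval u \<le> M} \<ge> c / 2"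
    proof -
      have "u n \<le> measure_pmf.prob ?S ({u. 0 < Zval u \<and> Zval u \<le> M} \<union> {t. M < Zval t})"
        unfolding u_def by (intro measure_pmf.finite_measure_mono) auto
      also have "\<dots> \<le> measure_pmf.prob ?S {u. 0 < Zval u \<and> Zval u \<le> M} + measure_pmf.prob ?S {t. M < Zval t}"
        by (rule measure_subadditive) (auto simp: measure_pmf.emeasure_eq_measure)
      finally show ?thesis using big[of n] uc[of n] by simp
    qed
    then have "u n - \<delta> * measure_pmf.prob ?S {u. 0 < Zval u \<and> Zval u \<le> M} \<le> u n - \<delta> * (c/2)"
      using \<delta> by (intro diff_left_mono mult_left_mono) auto
    finally show ?thesis by simp
  qed
  have lin: "u n \<le> 1 - n * (\<delta> * c / 2)" for n
  proof (induction n)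
    case 0 then show ?case by (simp add: u_def measure_pmf.prob_le_1)
  next
    case (Suc n) then show ?case using dec[of n] by (simp add: algebra_simps add_divide_distrib)
  qed
  obtain n :: nat where n: "real n > 1 / (\<delta> * c / 2)"
    using reals_Archimedean2 by blast
  then have "n * (\<delta> * c / 2) > 1" using \<delta> cpos by (simp add: field_simps)
  with lin[of n] uc[of n] cpos show False by simp
qed

end

lemma bin_add:
  assumes "r \<in> {0..1}"
  shows "binomial_pmf (n1+n2) r = binomial_pmf n1 r \<bind> (\<lambda>x. map_pmf ((+) x) (binomial_pmf n2 r))"
proof (induction n1)
  case 0
  then show ?case using assms by (simp add: binomial_pmf_0 bind_return_pmf map_pmf_ident[unfolded id_def] cong: map_pmf_cong)
next
  case (Suc n1)
  have "binomial_pmf (Suc n1 + n2) r = binomial_pmf (Suc (n1 + n2)) r" by simp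
  also have "\<dots> = bernoulli_pmf r \<bind> (\<lambda>b. binomial_pmf (n1+n2) r \<bind> (\<lambda>k. return_pmf ((if b then 1 else 0) + k)))"
    using assms by (rule binomial_pmf_Suc)
  also have "\<dots> = binomial_pmf (Suc n1) r \<bind> (\<lambda>x. map_pmf ((+) x) (binomial_pmf n2 r))"
    unfolding Suc binomial_pmf_Suc[OF assms, of n1]
    by (simp add: bind_assoc_pmf bind_return_pmf map_pmf_def add.assoc)
  finally show ?case .
qed

lemma E_bin_add:
  fixes f :: "nat \<Rightarrow> real"
  assumes "r \<in> {0..1}"
  shows "measure_pmf.expectation (binomial_pmf (n1+n2) r) f =
    measure_pmf.expectation (binomial_pmf n1 r) (\<lambda>x. measure_pmf.expectation (binomial_pmf n2 r) (\<lambda>y. f (x+y)))"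
  unfolding bin_add[OF assms] using assms
  by (subst E_fin_bind) (auto intro!: finite_imageI finite_set_pmf_binomial_pmf)

lemma bin_mono:
  fixes f :: "nat \<Rightarrow> real"
  assumes "r \<in> {0..1}" "n \<le> n'" "\<And>x y. x \<le> y \<Longrightarrow> f y \<le> f x"
  shows "measure_pmf.expectation (binomial_pmf n' r) f \<le> measure_pmf.expectation (binomial_pmf n r) f"
proof -
  obtain k where k: "n' = n + k" using assms(2) le_Suc_ex by blast
  have "measure_pmf.expectation (binomial_pmf n' r) f =
    measure_pmf.expectation (binomial_pmf n r) (\<lambda>x. measure_pmf.expectation (binomial_pmf k r) (\<lambda>y. f (x+y)))"
    unfolding k by (rule E_bin_add[OF assms(1)])
  also have "\<dots> \<le> measure_pmf.expectation (binomial_pmf n r) (\<lambda>x. measure_pmf.expectation (binomial_pmf k r) (\<lambda>y. f x))"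
    using assms by (intro integral_mono) auto
  also have "\<dots> = measure_pmf.expectation (binomial_pmf n r) f" by simp
  finally show ?thesis .
qed

lemma E_pair:
  fixes f :: "_ \<Rightarrow> real"
  assumes "finite (set_pmf A)" "finite (set_pmf B)"
  shows "measure_pmf.expectation (pair_pmf A B) f =
    measure_pmf.expectation A (\<lambda>a. measure_pmf.expectation B (\<lambda>b. f (a,b)))"
  unfolding pair_pmf_def using assms
  by (subst E_fin_bind) (auto simp: E_fin_bind)

context coop begin

lemma E_step: "measure_pmf.expectation (coop_step p q (x,y)) (f :: _ \<Rightarrow> real) =
   measure_pmf.expectation (binomial_pmf (2*(x+y)) q) (\<lambda>a.
     measure_pmf.expectation (binomial_pmf (2 * min x y) p) (\<lambda>b. f (a,b)))"
  unfolding coop_step_def using p q by (simp add: E_pair)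

definition goodfun :: "(nat \<times> nat \<Rightarrow> real) \<Rightarrow> bool" where
  "goodfun h \<longleftrightarrow> (\<forall>s. 0 \<le> h s \<and> h s \<le> 1) \<and> (\<forall>a b c d. a \<le> c \<longrightarrow> b \<le> d \<longrightarrow> h (c,d) \<le> h (a,b))
     \<and> (\<forall>a b c d. h (a+c, b+d) \<le> h (a,b) * h (c,d))"

lemma pairmono:
  fixes h :: "nat \<times> nat \<Rightarrow> real"
  assumes anti: "\<And>a b c d. a \<le> c \<Longrightarrow> b \<le> d \<Longrightarrow> h (c,d) \<le> h (a,b)"
    and "n1 \<le> n2" "m1 \<le> m2"
  shows "measure_pmf.expectation (binomial_pmf n2 q) (\<lambda>a. measure_pmf.expectation (binomial_pmf m2 p) (\<lambda>b. h (a,b)))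
      \<le> measure_pmf.expectation (binomial_pmf n1 q) (\<lambda>a. measure_pmf.expectation (binomial_pmf m1 p) (\<lambda>b. h (a,b)))"
proof -
  have "measure_pmf.expectation (binomial_pmf n2 q) (\<lambda>a. measure_pmf.expectation (binomial_pmf m2 p) (\<lambda>b. h (a,b)))
      \<le> measure_pmf.expectation (binomial_pmf n2 q) (\<lambda>a. measure_pmf.expectation (binomial_pmf m1 p) (\<lambda>b. h (a,b)))"
    using p q assms by (intro integral_mono bin_mono) auto
  also have "\<dots> \<le> measure_pmf.expectation (binomial_pmf n1 q) (\<lambda>a. measure_pmf.expectation (binomial_pmf m1 p) (\<lambda>b. h (a,b)))"
    using p q assms by (intro integral_mono bin_mono) auto
  finally show ?thesis .
qed

lemma goodfun_step:
  assumes "goodfun h"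
  shows "goodfun (\<lambda>s. measure_pmf.expectation (coop_step p q s) h)"
proof -
  from assms have b: "0 \<le> h s" "h s \<le> 1" for s by (cases s, auto simp: goodfun_def)+
  from assms have anti: "\<And>a b c d. a \<le> c \<Longrightarrow> b \<le> d \<Longrightarrow> h (c,d) \<le> h (a,b)" by (auto simp: goodfun_def)
  from assms have sm: "\<And>a b c d. h (a+c, b+d) \<le> h (a,b) * h (c,d)" by (auto simp: goodfun_def)
  let ?H = "\<lambda>s. measure_pmf.expectation (coop_step p q s) h"
  have "0 \<le> ?H s" for s using b by (intro integral_nonneg_AE) auto
  moreover have "?H s \<le> 1" for s
  proof -
    have "?H s \<le> measure_pmf.expectation (coop_step p q s) (\<lambda>_. 1)"
      using b fin_step by (intro integral_mono integrable_measure_pmf_finite) auto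
    then show ?thesis by simp
  qed
  moreover have "?H (c,d) \<le> ?H (a,b)" if "a \<le> c" "b \<le> d" for a b c d
    unfolding E_step using that by (intro pairmono anti) auto
  moreover have "?H (a+c, b+d) \<le> ?H (a,b) * ?H (c,d)" for a b c d
  proof -
    define n1 where "n1 = 2*(a+b)"
    define n2 where "n2 = 2*(c+d)"
    define m1 where "m1 = 2*min a b"
    define m2 where "m2 = 2*min c d"
    let ?E = "measure_pmf.expectation :: nat pmf \<Rightarrow> (nat \<Rightarrow> real) \<Rightarrow> real"
    let ?Bq = "\<lambda>n. binomial_pmf n q" and ?Bp = "\<lambda>n. binomial_pmf n p"
    have "?H (a+c, b+d) \<le> ?E (?Bq (n1+n2)) (\<lambda>x. ?E (?Bp (m1+m2)) (\<lambda>y. h (x,y)))"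
      unfolding E_step n1_def n2_def m1_def m2_def by (intro pairmono anti) (auto simp: min_def)
    also have "\<dots> = ?E (?Bq n1) (\<lambda>x1. ?E (?Bq n2) (\<lambda>x2. ?E (?Bp m1) (\<lambda>y1. ?E (?Bp m2) (\<lambda>y2. h (x1+x2, y1+y2)))))"
      using p q by (simp add: E_bin_add)
    also have "\<dots> \<le> ?E (?Bq n1) (\<lambda>x1. ?E (?Bq n2) (\<lambda>x2. ?E (?Bp m1) (\<lambda>y1. ?E (?Bp m2) (\<lambda>y2. h (x1, y1) * h (x2, y2)))))"
      using p q sm by (intro integral_mono) auto
    also have "\<dots> = ?E (?Bq n1) (\<lambda>x1. ?E (?Bp m1) (\<lambda>y1. h (x1, y1))) * ?E (?Bq n2) (\<lambda>x2. ?E (?Bp m2) (\<lambda>y2. h (x2, y2)))"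
      by simp
    also have "\<dots> = ?H (a,b) * ?H (c,d)"
      unfolding E_step n1_def n2_def m1_def m2_def ..
    finally show ?thesis .
  qed
  ultimately show ?thesis unfolding goodfun_def by blast
qed

lemma goodfun_state:
  assumes "goodfun h"
  shows "goodfun (\<lambda>s. measure_pmf.expectation (coop_state p q n s) h)"
proof (induction n)
  case 0
  then show ?case using assms by (simp add: state_0)
next
  case (Suc n)
  have "(\<lambda>s. measure_pmf.expectation (coop_state p q (Suc n) s) h) =
     (\<lambda>s. measure_pmf.expectation (coop_step p q s) (\<lambda>t. measure_pmf.expectation (coop_state p q n t) h))"
    unfolding state_Suc by (intro ext E_fin_bind fin_step fin_state)
  then show ?case using goodfun_step[OF Suc.IH] by simp
qed

lemma goodfun_pow:
  assumes "goodfun h"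
  shows "h (k*N, k*N) \<le> h (N,N)^k"
proof (induction k)
  case 0
  then show ?case using assms by (simp add: goodfun_def)
next
  case (Suc k)
  have "h (Suc k * N, Suc k * N) = h (N + k*N, N + k*N)" by simp
  also have "\<dots> \<le> h (N,N) * h (k*N, k*N)" using assms unfolding goodfun_def by blast
  also have "\<dots> \<le> h (N,N) * h (N,N)^k"
    using Suc assms by (intro mult_left_mono) (auto simp: goodfun_def)
  finally show ?case by simp
qed

lemma goodfun_anti:
  assumes "goodfun h" "a \<le> fst s" "b \<le> snd s"
  shows "h s \<le> h (a,b)"
  using assms by (cases s) (auto simp: goodfun_def)

lemma goodfun_gen:
  assumes "0 \<le> g" "g \<le> 1"
  shows "goodfun (\<lambda>s. g ^ (Zval s div N))"
  unfolding goodfun_def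
proof (intro conjI allI impI)
  fix s show "0 \<le> g ^ (Zval s div N)" "g ^ (Zval s div N) \<le> 1" using assms by (auto simp: power_le_one)
next
  fix a b c d :: nat assume "a \<le> c" "b \<le> d"
  then have "Zval (a,b) div N \<le> Zval (c,d) div N" by (intro div_le_mono) (auto simp: Zval_def)
  then show "g ^ (Zval (c,d) div N) \<le> g ^ (Zval (a,b) div N)" using assms by (intro power_decreasing) auto
next
  fix a b c d :: nat
  have "Zval (a,b) + Zval (c,d) \<le> Zval (a+c, b+d)" by (auto simp: Zval_def)
  then have "Zval (a,b) div N + Zval (c,d) div N \<le> Zval (a+c, b+d) div N"
    by (metis div_add1_eq div_le_mono le_add1 order.trans)
  then have "g ^ (Zval (a+c,b+d) div N) \<le> g ^ (Zval (a,b) div N + Zval (c,d) div N)"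
    using assms by (intro power_decreasing) auto
  then show "g ^ (Zval (a+c,b+d) div N) \<le> g ^ (Zval (a,b) div N) * g ^ (Zval (c,d) div N)"
    by (simp add: power_add)
qed

end

lemma pow_bound:
  fixes e :: real
  assumes "0 \<le> e" "e \<le> 1"
  shows "(1 - e)^k \<le> 1 - k*e + (k*e)^2"
proof (induction k)
  case 0 then show ?case by simp
next
  case (Suc k)
  have "(1-e)^Suc k = (1-e) * (1-e)^k" by simp
  also have "\<dots> \<le> (1-e) * (1 - k*e + (k*e)^2)" using Suc assms by (intro mult_left_mono) auto
  also have "\<dots> \<le> 1 - Suc k * e + (Suc k * e)^2"
  proof -
    have "(1-e) * (1 - k*e + (k*e)^2) = 1 - (k+1)*e + k*e^2 + k^2*e^2 - k^2*e^3"
      by (simp add: algebra_simps power2_eq_square power3_eq_cube)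
    also have "\<dots> \<le> 1 - (k+1)*e + (k+1)^2*e^2"
    proof -
      have "k*e^2 \<le> 2*k*e^2 + e^2" using assms by simp
      moreover have "0 \<le> k^2*e^3" using assms by simp
      ultimately show ?thesis by (simp add: algebra_simps power2_eq_square)
    qed
    finally show ?thesis by (simp add: power_mult_distrib)
  qed
  finally show ?case .
qed

context coop begin

lemma gw:
  assumes N: "N \<ge> 1" and T: "T \<ge> 1"
    and m: "measure_pmf.expectation (coop_state p q T (N, N)) (\<lambda>s. real (Zval s div N)) > 1"
  shows "\<exists>g. 0 \<le> g \<and> g < 1 \<and> (\<forall>n s k. k*N \<le> fst s \<longrightarrow> k*N \<le> snd s \<longrightarrow>
            measure_pmf.prob (coop_state p q (n*T) s) {t. 0 < Zval t} \<ge> 1 - g^k)"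
proof -
  let ?S = "coop_state p q T (N, N)"
  define \<xi> where "\<xi> s = real (Zval s div N)" for s
  define mm where "mm = measure_pmf.expectation ?S \<xi>"
  define SS where "SS = measure_pmf.expectation ?S (\<lambda>s. (\<xi> s)^2)"
  have mm1: "mm > 1" using m unfolding mm_def \<xi>_def[abs_def] by simp
  have "mm \<le> SS" unfolding mm_def SS_def
  proof (intro integral_mono)
    fix s show "\<xi> s \<le> (\<xi> s)^2" unfolding \<xi>_def
      by (cases "Zval s div N") (auto simp: power2_eq_square)
  qed auto
  with mm1 have SS: "SS > 0" "mm - 1 < SS" by auto
  define e where "e = (mm - 1) / SS"
  have e: "0 < e" "e < 1" using SS mm1 by (auto simp: e_def field_simps)
  define g where "g = 1 - e"
  have g: "0 \<le> g" "g < 1" "g \<le> 1" using e by (auto simp: g_def)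
  let ?h = "\<lambda>s. g ^ (Zval s div N)"
  define H where "H s = measure_pmf.expectation (coop_state p q T s) ?h" for s
  have gH: "goodfun H" unfolding H_def by (intro goodfun_state goodfun_gen g)
  have fg: "H (N,N) \<le> g"
  proof -
    have "H (N,N) \<le> measure_pmf.expectation ?S (\<lambda>s. 1 - \<xi> s * e + (\<xi> s * e)^2)"
      unfolding H_def g_def \<xi>_def using e by (intro integral_mono pow_bound) auto
    also have "\<dots> = 1 - mm * e + SS * e^2"
      by (simp add: mm_def SS_def power_mult_distrib)
    also have "SS * e^2 = e * (mm - 1)" using SS by (simp add: e_def power2_eq_square)
    finally show ?thesis by (simp add: g_def algebra_simps)
  qed
  have H0: "0 \<le> H s" for s using gH by (cases s) (auto simp: goodfun_def)
  have main: "measure_pmf.prob (coop_state p q (n*T) s) {t. 0 < Zval t} \<ge> 1 - g^k"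
    if "k*N \<le> fst s" "k*N \<le> snd s" for n s k
    using that
  proof (induction n arbitrary: s k)
    case 0
    show ?case
    proof (cases k)
      case 0 then show ?thesis by simp
    next
      case (Suc k')
      then have "0 < Zval s" using 0 N by (cases s) (auto simp: Zval_def intro: order.strict_trans2[of 0 "k*N"])
      then show ?thesis using g by (simp add: state_0)
    qed
  next
    case (Suc n)
    have "measure_pmf.prob (coop_state p q (Suc n * T) s) {t. 0 < Zval t} =
      measure_pmf.expectation (coop_state p q T s) (\<lambda>t. measure_pmf.prob (coop_state p q (n*T) t) {t. 0 < Zval t})"
      by (simp only: mult_Suc state_add prob_as_E, subst E_fin_bind) (auto simp: fin_state)
    also have "\<dots> \<ge> measure_pmf.expectation (coop_state p q T s) (\<lambda>t. 1 - ?h t)"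
    proof (intro integral_mono)
      fix t :: "nat \<times> nat"
      have "(Zval t div N) * N \<le> Zval t" by simp
      then show "1 - ?h t \<le> measure_pmf.prob (coop_state p q (n*T) t) {t. 0 < Zval t}"
        by (intro Suc.IH) (auto simp: Zval_def)
    qed auto
    also have "measure_pmf.expectation (coop_state p q T s) (\<lambda>t. 1 - ?h t) = 1 - H s"
      by (simp add: H_def)
    finally have A: "1 - H s \<le> measure_pmf.prob (coop_state p q (Suc n * T) s) {t. 0 < Zval t}" .
    have "H s \<le> H (k*N, k*N)" using Suc.prems by (intro goodfun_anti[OF gH]) auto
    also have "\<dots> \<le> H (N,N)^k" by (rule goodfun_pow[OF gH])
    also have "\<dots> \<le> g^k" using fg H0 by (intro power_mono) auto
    finally show ?case using A by simp
  qed
  show ?thesis using g main by blast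
qed

end


context coop begin

lemma reach: "\<exists>x. 2^j \<le> x \<and> (x, 2^j) \<in> set_pmf (coop_state p q j (1,1))"
proof (induction j)
  case 0 then show ?case by (simp add: state_0)
next
  case (Suc j)
  then obtain x where x: "2^j \<le> x" "(x, 2^j) \<in> set_pmf (coop_state p q j (1,1))" by blast
  have m: "min x (2^j) = (2::nat)^j" using x by simp
  have "(2*(x+2^j), 2^Suc j) \<in> set_pmf (coop_step p q (x, 2^j))"
    using p q by (simp add: coop_step_def m)
  then have "(2*(x+2^j), 2^Suc j) \<in> set_pmf (coop_state p q (Suc j) (1,1))"
    unfolding state_Suc' using x by auto
  moreover have "2^Suc j \<le> 2*(x+2^j)" using x by simp
  ultimately show ?case by blast
qed

lemma surv_Suc: "measure_pmf.prob (coop_state p q (Suc n) s) {t. 0 < Zval t} \<le>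
    measure_pmf.prob (coop_state p q n s) {t. 0 < Zval t}"
proof -
  have "measure_pmf.prob (coop_state p q (Suc n) s) {t. 0 < Zval t} =
    measure_pmf.expectation (coop_state p q n s) (\<lambda>t. measure_pmf.prob (coop_step p q t) {u. 0 < Zval u})"
    unfolding state_Suc' by (subst prob_as_E, subst E_fin_bind) (auto simp: fin_state fin_step)
  also have "\<dots> \<le> measure_pmf.expectation (coop_state p q n s) (indicator {u. 0 < Zval u})"
  proof (intro integral_mono)
    fix t
    show "measure_pmf.prob (coop_step p q t) {u. 0 < Zval u} \<le> indicator {u. 0 < Zval u} t"
      using step_ineq[of t 0] by (auto simp: indicator_def split: if_splits)
  qed auto
  finally show ?thesis by simp
qed

lemma surv_anti: "n \<le> n' \<Longrightarrow> measure_pmf.prob (coop_state p q n' s) {t. 0 < Zval t} \<le>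
    measure_pmf.prob (coop_state p q n s) {t. 0 < Zval t}"
  by (rule lift_Suc_antimono_le[of "\<lambda>n. measure_pmf.prob (coop_state p q n s) {t. 0 < Zval t}"])
     (auto intro: surv_Suc)

lemma b_imp_a:
  assumes N: "N \<ge> 1" and T: "T \<ge> 1"
    and m: "measure_pmf.expectation (coop_state p q T (N, N)) (\<lambda>s. real (Zval s div N)) > 1"
  shows "coop_surv_inf p q (1,1) > 0"
proof -
  obtain g where g: "0 \<le> g" "g < 1" and G: "\<And>n s k. k*N \<le> fst s \<Longrightarrow> k*N \<le> snd s \<Longrightarrow>
            measure_pmf.prob (coop_state p q (n*T) s) {t. 0 < Zval t} \<ge> 1 - g^k"
    using gw[OF N T m] by blast
  obtain x where x: "2^N \<le> x" "(x, 2^N) \<in> set_pmf (coop_state p q N (1,1))" using reach by blast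
  define t0 where "t0 = (x, (2::nat)^N)"
  have Nle: "N \<le> 2^N" using less_exp[of N] by simp
  define \<pi> where "\<pi> = pmf (coop_state p q N (1,1)) t0"
  have \<pi>: "\<pi> > 0" using x by (simp add: \<pi>_def t0_def pmf_positive)
  have low: "coop_surv p q n (1,1) \<ge> (1-g) * \<pi>" for n
  proof -
    let ?F = "\<lambda>t. measure_pmf.prob (coop_state p q (n*T) t) {t. 0 < Zval t}"
    have "(1-g) * \<pi> = measure_pmf.expectation (coop_state p q N (1,1)) (\<lambda>t. (1-g) * indicator {t0} t)"
      by (simp add: \<pi>_def measure_pmf_single)
    also have "\<dots> \<le> measure_pmf.expectation (coop_state p q N (1,1)) ?F"
    proof (intro integral_mono)
      fix t show "(1-g) * indicator {t0} t \<le> ?F t"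
      proof (cases "t = t0")
        case True
        then show ?thesis using G[of 1 t n] x Nle by (simp add: t0_def)
      qed simp
    qed auto
    also have "\<dots> = measure_pmf.prob (coop_state p q (N + n*T) (1,1)) {t. 0 < Zval t}"
      unfolding state_add by (subst (2) prob_as_E, subst E_fin_bind) (auto simp: fin_state)
    also have "\<dots> \<le> coop_surv p q n (1,1)"
      unfolding surv_eq using T by (intro surv_anti) (simp add: trans_le_add2)
    finally show ?thesis .
  qed
  have "(1-g) * \<pi> \<le> coop_surv_inf p q (1,1)"
    unfolding coop_surv_inf_def using low[of _] by (intro cINF_greatest) (auto simp del: One_nat_def)
  moreover have "(1-g) * \<pi> > 0" using g \<pi> by simp
  ultimately show ?thesis by linarith
qed

end

theorem lemma3:
  fixes p q :: real
  assumes "0 < p" "p < 1" "0 < q" "q < 1"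
  shows "coop_surv_inf p q (1, 1) > 0 \<longleftrightarrow>
         (\<exists>N T :: nat. N \<ge> 1 \<and> T \<ge> 1 \<and>
            measure_pmf.expectation (coop_state p q T (N, N))
              (\<lambda>s. real (Zval s div N)) > 1)"
proof -
  interpret coop p q using assms by unfold_locales
  show ?thesis
  proof
    assume a: "coop_surv_inf p q (1, 1) > 0"
    show "\<exists>N T :: nat. N \<ge> 1 \<and> T \<ge> 1 \<and>
            measure_pmf.expectation (coop_state p q T (N, N)) (\<lambda>s. real (Zval s div N)) > 1"
    proof (rule ccontr)
      assume "\<not> ?thesis"
      then have "\<And>T. T \<ge> 1 \<Longrightarrow> \<not> measure_pmf.expectation (coop_state p q T (1,1)) (\<lambda>s. real (Zval s div 1)) > 1"
        by blast
      then have "\<And>T. T \<ge> 1 \<Longrightarrow> measure_pmf.expectation (coop_state p q T (1,1)) (\<lambda>s. real (Zval s)) \<le> 1"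
        by (simp only: div_by_1 not_less)
      with surv_imp a show False by (simp del: One_nat_def)
    qed
  next
    assume "\<exists>N T :: nat. N \<ge> 1 \<and> T \<ge> 1 \<and>
            measure_pmf.expectation (coop_state p q T (N, N)) (\<lambda>s. real (Zval s div N)) > 1"
    then show "coop_surv_inf p q (1, 1) > 0" using b_imp_a by blast
  qed
qed

end
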